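(* Let $(S,C,T,\mathbf{p},\mathbf{c})$ be a DFEP instance, let $\rho>0$, let $D_E$ be a decision tree for it with expected testing cost $E=cost_E(D_E)$ and let $D_W$ be a decision tree for it with worst testing cost $W=cost_W(D_W)$. Let $D$ be the tree returned by \texttt{CombineTrees}$(D_E,D_W,\rho)$. Then $cost_E(D)\le (1+1/\rho)E$ and $cost_W(D)\le (1+\rho)W$.
   Context: A DFEP instance $(S,C,T,\mathbf{p},\mathbf{c})$: $S$ a finite set of objects partitioned into classes $C$; $T$ a complete set of tests $t:S\to\{1,\dots,\ell\}$ (any two distinct objects are distinguished by some test); $\mathbf p$ a probability distribution on $S$; each test $t$ has a cost $c(t)\in\mathbb{Q}^+$. A decision tree is a leaf labeled with a class if all objects in the current set belong to that class; otherwise its root is labeled with a test $t$ and its children are decision trees for the nonempty sets $\{s: t(s)=i\}$ within the current set. $cost(D,s)$ is the sum of the costs of the tests on the root-to-leaf path of object $s$; $cost_W(D)=\max_{s} cost(D,s)$ and $cost_E(D)=\sum_s cost(D,s)p(s)$. Procedure \texttt{CombineTrees}$(D_E,D_W,\rho)$: (1) call a node $v$ of $D_E$ replaceable if the total cost of the path from the root of $D_E$ to $v$ (including $v$) is at least $\rho W$ while the cost of the path from the root of $D_E$ to the parent of $v$ is smaller than $\rho W$; let $R$ be the set of replaceable nodes. (2) For each $v\in R$, let $S(v)$ be the set of objects associated with leaves of the subtree of $D_E$ rooted at $v$, let $D_W^{S(v)}$ be the decision tree for $S(v)$ obtained from $D_W$ by disassociating every object of $S\setminus S(v)$ from it, and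 replace the subtree of $D_E$ rooted at $v$ by $D_W^{S(v)}$. (3) Return the resulting tree $D$. *)

theory Defs
  imports Complex_Main
begin

datatype ('t,'c) dtree = Leaf 'c | Node 't "nat \<Rightarrow> ('t,'c) dtree option"

inductive dtree_for :: "'t set \<Rightarrow> ('t \<Rightarrow> 'a \<Rightarrow> nat) \<Rightarrow> ('a \<Rightarrow> 'c) \<Rightarrow> 'a set \<Rightarrow> ('t,'c) dtree \<Rightarrow> bool"
  for T ev cls where
  leaf: "(\<forall>s\<in>X. cls s = k) \<Longrightarrow> dtree_for T ev cls X (Leaf k)"
| node: "t \<in> T \<Longrightarrow> \<not> (\<exists>k. \<forall>s\<in>X. cls s = k)
   \<Longrightarrow> (\<forall>i. ({s\<in>X. ev t s = i} = {}) = (ch i = None))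
   \<Longrightarrow> (\<forall>i d. ch i = Some d \<longrightarrow> dtree_for T ev cls {s\<in>X. ev t s = i} d)
   \<Longrightarrow> dtree_for T ev cls X (Node t ch)"

primrec tcost :: "('t \<Rightarrow> real) \<Rightarrow> ('t \<Rightarrow> 'a \<Rightarrow> nat) \<Rightarrow> ('t,'c) dtree \<Rightarrow> 'a \<Rightarrow> real" where
  "tcost c ev (Leaf k) s = 0"
| "tcost c ev (Node t ch) s = c t + (case map_option (\<lambda>d. tcost c ev d s) (ch (ev t s)) of None \<Rightarrow> 0 | Some r \<Rightarrow> r)"

primrec restrict_tree :: "('t \<Rightarrow> 'a \<Rightarrow> nat) \<Rightarrow> ('t,'c) dtree \<Rightarrow> 'a set \<Rightarrow> ('t,'c) dtree" where
  "restrict_tree ev (Leaf k) X = Leaf k"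
| "restrict_tree ev (Node t ch) X = Node t (\<lambda>i. if {s\<in>X. ev t s = i} = {} then None
      else map_option (\<lambda>d. restrict_tree ev d {s\<in>X. ev t s = i}) (ch i))"


definition cost_W :: "('t \<Rightarrow> real) \<Rightarrow> ('t \<Rightarrow> 'a \<Rightarrow> nat) \<Rightarrow> 'a set \<Rightarrow> ('t,'c) dtree \<Rightarrow> real" where
  "cost_W c ev S D = Max ((\<lambda>s. tcost c ev D s) ` S)"

definition cost_E :: "('t \<Rightarrow> real) \<Rightarrow> ('t \<Rightarrow> 'a \<Rightarrow> nat) \<Rightarrow> ('a \<Rightarrow> real) \<Rightarrow> 'a set \<Rightarrow> ('t,'c) dtree \<Rightarrow> real" where
  "cost_E c ev p S D = (\<Sum>s\<in>S. tcost c ev D s * p s)"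

text \<open>Walk down the subtree of D_E rooted at the current node v.  X is the set of objects
  associated with the leaves of that subtree and acc is the cost of the path from the root
  to the parent of v (0 at the root).\<close>
primrec combine_aux :: "('t \<Rightarrow> real) \<Rightarrow> ('t \<Rightarrow> 'a \<Rightarrow> nat) \<Rightarrow> real \<Rightarrow> ('t,'c) dtree
    \<Rightarrow> ('t,'c) dtree \<Rightarrow> 'a set \<Rightarrow> real \<Rightarrow> ('t,'c) dtree" where
  "combine_aux c ev thr DW (Leaf k) X acc =
     (if thr \<le> acc \<and> acc < thr then restrict_tree ev DW X else Leaf k)"
| "combine_aux c ev thr DW (Node t ch) X acc =
     (if thr \<le> acc + c t \<and> acc < thr then restrict_tree ev DW X
      else Node t (\<lambda>i. map_option (\<lambda>d. combine_aux c ev thr DW d {s\<in>X. ev t s = i} (acc + c t)) (ch i)))"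

definition combine_trees :: "('t \<Rightarrow> real) \<Rightarrow> ('t \<Rightarrow> 'a \<Rightarrow> nat) \<Rightarrow> 'a set
    \<Rightarrow> ('t,'c) dtree \<Rightarrow> ('t,'c) dtree \<Rightarrow> real \<Rightarrow> ('t,'c) dtree" where
  "combine_trees c ev S DE DW \<rho> = combine_aux c ev (\<rho> * cost_W c ev S DW) DW DE S 0"

end

theory Submission
  imports Defs
begin

lemma tcost_restrict: "s \<in> X \<Longrightarrow> tcost c ev (restrict_tree ev D X) s = tcost c ev D s"
proof (induction D arbitrary: X)
  case (Leaf x)
  then show ?case by simp
next
  case (Node t ch)
  show ?case
  proof (cases "ch (ev t s)")
    case None
    then show ?thesis using Node.prems by auto
  next
    case (Some d)
    have "d \<in> set_option (ch (ev t s))" using Some by simp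
    then have "tcost c ev (restrict_tree ev d {s'\<in>X. ev t s' = ev t s}) s = tcost c ev d s"
      using Node.IH[of "Some d" d "{s'\<in>X. ev t s' = ev t s}"] Some Node.prems by (metis (mono_tags, lifting) mem_Collect_eq rangeI)
    then show ?thesis using Some Node.prems by auto
  qed
qed

lemma tcost_nonneg:
  assumes "dtree_for T ev cls Y D" "\<forall>t\<in>T. 0 < c t"
  shows "0 \<le> tcost c ev D s"
  using assms(1)
proof (induction rule: dtree_for.induct)
  case (leaf X k)
  then show ?case by simp
next
  case (node t X ch)
  then show ?case
    by (cases "ch (ev t s)") (auto simp: assms(2) less_imp_le add_nonneg_nonneg)
qed

lemma worst_aux:
  assumes "dtree_for T ev cls Y D" "\<forall>t\<in>T. 0 < c t"
    and le: "\<forall>s\<in>S. tcost c ev DW s \<le> W" and W0: "0 \<le> W"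
  shows "s \<in> X \<Longrightarrow> X \<subseteq> S \<Longrightarrow> acc < thr \<Longrightarrow>
     acc + tcost c ev (combine_aux c ev thr DW D X acc) s \<le> thr + W"
  using assms(1)
proof (induction arbitrary: X acc rule: dtree_for.induct)
  case (leaf X' k)
  have "\<not> (thr \<le> acc \<and> acc < thr)" by linarith
  then have "combine_aux c ev thr DW (Leaf k) X acc = Leaf k"
    unfolding combine_aux.simps by (rule if_not_P)
  then show ?case using leaf.prems W0 by simp
next
  case (node t X' ch)
  have sX: "s \<in> X" "X \<subseteq> S" "acc < thr" by fact+
  show ?case
  proof (cases "thr \<le> acc + c t")
    case True
    have e: "combine_aux c ev thr DW (Node t ch) X acc = restrict_tree ev DW X"
      unfolding combine_aux.simps using True sX(3) by (intro if_P conjI)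
    have "s \<in> S" using sX by blast
    then have "tcost c ev DW s \<le> W" using le by blast
    then show ?thesis unfolding e tcost_restrict[OF sX(1)] using sX by linarith
  next
    case False
    then have e: "combine_aux c ev thr DW (Node t ch) X acc =
      Node t (\<lambda>i. map_option (\<lambda>d. combine_aux c ev thr DW d {s\<in>X. ev t s = i} (acc + c t)) (ch i))"
      by simp
    show ?thesis
    proof (cases "ch (ev t s)")
      case None
      then show ?thesis unfolding e using False W0 by simp
    next
      case (Some d)
      have "acc + c t + tcost c ev (combine_aux c ev thr DW d {s'\<in>X. ev t s' = ev t s} (acc + c t)) s
          \<le> thr + W"
      proof -
        note h0 = conjunct2[OF node.IH[rule_format, OF Some]]
        have "s \<in> {s'\<in>X. ev t s' = ev t s}" "{s'\<in>X. ev t s' = ev t s} \<subseteq> S" "acc + c t < thr"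
          using sX False by auto
        from h0[rule_format, OF this] show ?thesis .
      qed
      then show ?thesis unfolding e using Some by (simp add: add.assoc)
    qed
  qed
qed

lemma exp_aux:
  assumes "dtree_for T ev cls Y D" and cpos: "\<forall>t\<in>T. 0 < c t"
    and le: "\<forall>s\<in>S. tcost c ev DW s \<le> W" and W0: "0 \<le> W" and rp: "0 < \<rho>" and thr: "thr = \<rho> * W"
  shows "s \<in> X \<Longrightarrow> X \<subseteq> S \<Longrightarrow> 0 \<le> acc \<Longrightarrow>
     acc + tcost c ev (combine_aux c ev thr DW D X acc) s \<le> (1 + 1/\<rho>) * (acc + tcost c ev D s)"
  using assms(1)
proof (induction arbitrary: X acc rule: dtree_for.induct)
  case (leaf X' k)
  have "\<not> (thr \<le> acc \<and> acc < thr)" by linarith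
  then have e: "combine_aux c ev thr DW (Leaf k) X acc = Leaf k"
    unfolding combine_aux.simps by (rule if_not_P)
  have "0 \<le> acc / \<rho>" using leaf.prems rp by simp
  moreover have "(1 + 1/\<rho>) * acc = acc + acc / \<rho>" by (simp add: distrib_right)
  ultimately show ?case unfolding e by simp
next
  case (node t X' ch)
  have sX: "s \<in> X" "X \<subseteq> S" "0 \<le> acc" by fact+
  have ct: "0 < c t" using node.hyps(1) cpos by blast
  have chn: "0 \<le> (case map_option (\<lambda>d. tcost c ev d s) (ch (ev t s)) of None \<Rightarrow> 0 | Some r \<Rightarrow> r)"
  proof (cases "ch (ev t s)")
    case (Some d)
    have "dtree_for T ev cls {s'\<in>X'. ev t s' = ev t s} d" by (rule conjunct1[OF node.IH[rule_format, OF Some]])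
    then have "0 \<le> tcost c ev d s" by (rule tcost_nonneg[OF _ cpos])
    then show ?thesis using Some by simp
  qed simp
  have tN: "tcost c ev (Node t ch) s = c t + (case map_option (\<lambda>d. tcost c ev d s) (ch (ev t s)) of None \<Rightarrow> 0 | Some r \<Rightarrow> r)"
    by simp
  show ?case
  proof (cases "thr \<le> acc + c t \<and> acc < thr")
    case True
    have e: "combine_aux c ev thr DW (Node t ch) X acc = restrict_tree ev DW X"
      unfolding combine_aux.simps using True by (rule if_P)
    have "s \<in> S" using sX by blast
    then have "tcost c ev DW s \<le> W" using le by blast
    then have 1: "acc + tcost c ev (combine_aux c ev thr DW (Node t ch) X acc) s \<le> acc + W"
      unfolding e tcost_restrict[OF sX(1)] by linarith
    have "W \<le> (acc + c t) / \<rho>" using True rp thr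
      by (simp add: pos_le_divide_eq mult.commute)
    moreover have "(1 + 1/\<rho>) * (acc + c t) = acc + c t + (acc + c t) / \<rho>"
      by (simp add: distrib_right)
    ultimately have "acc + W \<le> (1 + 1/\<rho>) * (acc + c t)"
      using ct by linarith
    with 1 have "acc + tcost c ev (combine_aux c ev thr DW (Node t ch) X acc) s \<le> (1 + 1/\<rho>) * (acc + c t)"
      by linarith
    also have "\<dots> \<le> (1 + 1/\<rho>) * (acc + tcost c ev (Node t ch) s)"
    proof (rule mult_left_mono)
      show "acc + c t \<le> acc + tcost c ev (Node t ch) s" unfolding tN using chn by linarith
      have "0 \<le> 1/\<rho>" using rp by simp
      then show "0 \<le> 1 + 1/\<rho>" by linarith
    qed
    finally show ?thesis .
  next
    case False
    have e: "combine_aux c ev thr DW (Node t ch) X acc =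
      Node t (\<lambda>i. map_option (\<lambda>d. combine_aux c ev thr DW d {s\<in>X. ev t s = i} (acc + c t)) (ch i))"
      unfolding combine_aux.simps using False by (rule if_not_P)
    show ?thesis
    proof (cases "ch (ev t s)")
      case None
      have "0 \<le> (acc + c t) / \<rho>" using ct sX rp by simp
      moreover have "(1 + 1/\<rho>) * (acc + c t) = acc + c t + (acc + c t) / \<rho>"
        by (simp add: distrib_right)
      ultimately have "acc + c t \<le> (1 + 1/\<rho>) * (acc + (c t + 0))" by simp
      then show ?thesis unfolding e tN using None by simp
    next
      case (Some d)
      have "acc + c t + tcost c ev (combine_aux c ev thr DW d {s'\<in>X. ev t s' = ev t s} (acc + c t)) s
          \<le> (1 + 1/\<rho>) * (acc + c t + tcost c ev d s)"
      proof -
        note h0 = conjunct2[OF node.IH[rule_format, OF Some]]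
        have "s \<in> {s'\<in>X. ev t s' = ev t s}" "{s'\<in>X. ev t s' = ev t s} \<subseteq> S" "0 \<le> acc + c t"
          using sX ct by auto
        from h0[rule_format, OF this] show ?thesis .
      qed
      then show ?thesis unfolding e tN using Some by (simp add: add.assoc)
    qed
  qed
qed

theorem theorem2:
  fixes S :: "'a set" and cls :: "'a \<Rightarrow> 'c" and T :: "'t set"
    and ev :: "'t \<Rightarrow> 'a \<Rightarrow> nat" and l :: nat
    and p :: "'a \<Rightarrow> real" and c :: "'t \<Rightarrow> real"
    and \<rho> :: real and DE DW :: "('t,'c) dtree"
  assumes fin_S: "finite S"
    and fin_T: "finite T"
    and test_range: "\<forall>t\<in>T. \<forall>s\<in>S. ev t s \<in> {1..l}"
    and complete: "\<forall>s1\<in>S. \<forall>s2\<in>S. s1 \<noteq> s2 \<longrightarrow> (\<exists>t\<in>T. ev t s1 \<noteq> ev t s2)"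
    and p_nonneg: "\<forall>s\<in>S. 0 \<le> p s"
    and p_sum: "(\<Sum>s\<in>S. p s) = 1"
    and c_rat: "\<forall>t\<in>T. c t \<in> \<rat> \<and> 0 < c t"
    and rho_pos: "0 < \<rho>"
    and DE: "dtree_for T ev cls S DE"
    and DW: "dtree_for T ev cls S DW"
  shows "cost_E c ev p S (combine_trees c ev S DE DW \<rho>) \<le> (1 + 1/\<rho>) * cost_E c ev p S DE
       \<and> cost_W c ev S (combine_trees c ev S DE DW \<rho>) \<le> (1 + \<rho>) * cost_W c ev S DW"
proof -
  have cpos: "\<forall>t\<in>T. 0 < c t" using c_rat by blast
  have Sne: "S \<noteq> {}" using p_sum by (metis sum.empty zero_neq_one)
  define W where "W = cost_W c ev S DW"
  define D where "D = combine_trees c ev S DE DW \<rho>"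
  have D_eq: "D = combine_aux c ev (\<rho> * W) DW DE S 0"
    unfolding D_def W_def combine_trees_def by simp
  have le_W: "\<forall>s\<in>S. tcost c ev DW s \<le> W"
    unfolding W_def cost_W_def
  proof
    fix s assume "s \<in> S"
    then show "tcost c ev DW s \<le> Max ((\<lambda>s. tcost c ev DW s) ` S)"
      using fin_S by (intro Max_ge) simp_all
  qed
  obtain s0 where s0: "s0 \<in> S" using Sne by auto
  have "tcost c ev DW s0 \<le> W" using le_W s0 by blast
  moreover have "0 \<le> tcost c ev DW s0" by (rule tcost_nonneg[OF DW cpos])
  ultimately have W0: "0 \<le> W" by linarith
  have E: "\<forall>s\<in>S. tcost c ev D s \<le> (1 + 1/\<rho>) * tcost c ev DE s"
  proof
    fix s assume s: "s \<in> S"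
    have "0 + tcost c ev (combine_aux c ev (\<rho> * W) DW DE S 0) s \<le> (1 + 1/\<rho>) * (0 + tcost c ev DE s)"
      by (rule exp_aux[OF DE cpos le_W W0 rho_pos refl]) (use s in auto)
    then show "tcost c ev D s \<le> (1 + 1/\<rho>) * tcost c ev DE s" unfolding D_eq by simp
  qed
  have part1: "cost_E c ev p S D \<le> (1 + 1/\<rho>) * cost_E c ev p S DE"
    unfolding cost_E_def sum_distrib_left
  proof (rule sum_mono)
    fix s assume s: "s \<in> S"
    have "tcost c ev D s * p s \<le> ((1 + 1/\<rho>) * tcost c ev DE s) * p s"
      using E s p_nonneg by (intro mult_right_mono) blast+
    then show "tcost c ev D s * p s \<le> (1 + 1/\<rho>) * (tcost c ev DE s * p s)"
      by (simp add: mult.assoc)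
  qed
  have Wb: "\<forall>s\<in>S. tcost c ev D s \<le> (1 + \<rho>) * W"
  proof (cases "W = 0")
    case False
    then have "0 < \<rho> * W" using W0 rho_pos by simp
    show ?thesis
    proof
      fix s assume s: "s \<in> S"
      have "0 + tcost c ev (combine_aux c ev (\<rho> * W) DW DE S 0) s \<le> \<rho> * W + W"
        by (rule worst_aux[OF DE cpos le_W W0]) (use s \<open>0 < \<rho> * W\<close> in auto)
      then show "tcost c ev D s \<le> (1 + \<rho>) * W" unfolding D_eq by (simp add: algebra_simps)
    qed
  next
    case True
    have allc: "\<exists>k. \<forall>s\<in>S. cls s = k"
      using DW
    proof cases
      case (leaf k) then show ?thesis by auto
    next
      case (node t ch)
      have "0 < c t" using node(2) cpos by blast
      moreover have "0 \<le> (case map_option (\<lambda>d. tcost c ev d s0) (ch (ev t s0)) of None \<Rightarrow> 0 | Some r \<Rightarrow> r)"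
      proof (cases "ch (ev t s0)")
        case (Some d)
        then have "dtree_for T ev cls {s'\<in>S. ev t s' = ev t s0} d" using node(5) by blast
        then have "0 \<le> tcost c ev d s0" by (rule tcost_nonneg[OF _ cpos])
        then show ?thesis using Some by simp
      qed auto
      ultimately have "0 < tcost c ev DW s0" unfolding node(1) by simp
      moreover have "tcost c ev DW s0 \<le> W" using le_W s0 by blast
      ultimately show ?thesis using True by linarith
    qed
    from DE obtain k where "DE = Leaf k"
    proof (cases rule: dtree_for.cases)
      case (leaf k') then show ?thesis using that by blast
    next
      case (node t ch) then show ?thesis using allc by blast
    qed
    then show ?thesis using D_eq True by simp
  qed
  have part2: "cost_W c ev S D \<le> (1 + \<rho>) * W"
    unfolding cost_W_def using fin_S Sne Wb by (subst Max_le_iff) blast+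
  show ?thesis unfolding D_def[symmetric] W_def[symmetric] using part1 part2 by (rule conjI)
qed

end
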